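(* Let $\mathbb{V}$ be a finitary variety of algebras which has 2-fold subobject decompositions over the countably infinite set $\mathbb{N}$. Then $\mathbb{V}$ is trivial, i.e. every algebra in $\mathbb{V}$ has at most one element.
   Context: A variety of algebras (as a category, it is regular) has 2-fold subobject decompositions over $\mathbb{N}$ if for every family $(A_n)_{n\in\mathbb{N}}$ of algebras in $\mathbb{V}$ and any two subalgebras $S,T$ of $\prod_{n\in\mathbb{N}}A_n$: if for all $i\neq j$ in $\mathbb{N}$ the images of $S$ and $T$ under the projection $\prod_n A_n\to A_i\times A_j$ coincide, then $S=T$. Finitary means all basic operations have finite arity. *)

theory Defs
  imports Main
begin

text \<open>Finitary signatures: operation symbols of type 'f with arity map ar :: 'f => nat.\<close>

datatype ('f,'v) trm = Var 'v | Op 'f "('f,'v) trm list"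

type_synonym ('f,'c) alg = "'c set \<times> ('f \<Rightarrow> 'c list \<Rightarrow> 'c)"

definition is_alg :: "('f \<Rightarrow> nat) \<Rightarrow> ('f,'c) alg \<Rightarrow> bool" where
  "is_alg ar A \<longleftrightarrow>
     (\<forall>f xs. length xs = ar f \<longrightarrow> set xs \<subseteq> fst A \<longrightarrow> snd A f xs \<in> fst A)"

fun eval :: "('f \<Rightarrow> 'c list \<Rightarrow> 'c) \<Rightarrow> ('v \<Rightarrow> 'c) \<Rightarrow> ('f,'v) trm \<Rightarrow> 'c" where
  "eval I \<sigma> (Var v) = \<sigma> v"
| "eval I \<sigma> (Op f ts) = I f (map (eval I \<sigma>) ts)"

fun wf_trm :: "('f \<Rightarrow> nat) \<Rightarrow> ('f,'v) trm \<Rightarrow> bool" where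
  "wf_trm ar (Var v) = True"
| "wf_trm ar (Op f ts) = (length ts = ar f \<and> (\<forall>t\<in>set ts. wf_trm ar t))"

definition is_eq_theory :: "('f \<Rightarrow> nat) \<Rightarrow> (('f,nat) trm \<times> ('f,nat) trm) set \<Rightarrow> bool" where
  "is_eq_theory ar E \<longleftrightarrow> (\<forall>(s,t)\<in>E. wf_trm ar s \<and> wf_trm ar t)"

definition satisfies :: "('f,'c) alg \<Rightarrow> (('f,nat) trm \<times> ('f,nat) trm) set \<Rightarrow> bool" where
  "satisfies A E \<longleftrightarrow>
     (\<forall>(s,t)\<in>E. \<forall>\<sigma>. (\<forall>v. \<sigma> v \<in> fst A) \<longrightarrow> eval (snd A) \<sigma> s = eval (snd A) \<sigma> t)"

definition in_variety :: "('f \<Rightarrow> nat) \<Rightarrow> (('f,nat) trm \<times> ('f,nat) trm) set \<Rightarrow> ('f,'c) alg \<Rightarrow> bool" where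
  "in_variety ar E A \<longleftrightarrow> is_alg ar A \<and> satisfies A E"

definition prod_alg :: "(nat \<Rightarrow> ('f,'c) alg) \<Rightarrow> ('f, nat \<Rightarrow> 'c) alg" where
  "prod_alg A = ({x. \<forall>n. x n \<in> fst (A n)}, (\<lambda>f xs n. snd (A n) f (map (\<lambda>x. x n) xs)))"

definition subalgebra :: "('f \<Rightarrow> nat) \<Rightarrow> 'c set \<Rightarrow> ('f,'c) alg \<Rightarrow> bool" where
  "subalgebra ar S B \<longleftrightarrow> S \<subseteq> fst B \<and>
     (\<forall>f xs. length xs = ar f \<longrightarrow> set xs \<subseteq> S \<longrightarrow> snd B f xs \<in> S)"

definition two_fold_decomp ::
  "('f \<Rightarrow> nat) \<Rightarrow> (('f,nat) trm \<times> ('f,nat) trm) set \<Rightarrow> 'c itself \<Rightarrow> bool" where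
  "two_fold_decomp ar E _ \<longleftrightarrow>
     (\<forall>A :: nat \<Rightarrow> ('f,'c) alg. (\<forall>n. in_variety ar E (A n)) \<longrightarrow>
        (\<forall>S T. subalgebra ar S (prod_alg A) \<longrightarrow> subalgebra ar T (prod_alg A) \<longrightarrow>
           (\<forall>i j. i \<noteq> j \<longrightarrow> (\<lambda>x. (x i, x j)) ` S = (\<lambda>x. (x i, x j)) ` T) \<longrightarrow> S = T))"

end

theory Submission
  imports Defs
begin

lemma common_bound:
  assumes "\<forall>x\<in>set xs. \<exists>N. \<forall>n\<ge>N. (x::nat\<Rightarrow>'c) n = x N"
  shows "\<exists>N. \<forall>x\<in>set xs. \<forall>n\<ge>N. x n = x N"
  using assms
proof (induction xs)
  case Nil
  then show ?case by simp
next
  case (Cons y ys)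
  then obtain N1 where N1: "\<forall>n\<ge>N1. y n = y N1" by auto
  from Cons obtain N2 where N2: "\<forall>x\<in>set ys. \<forall>n\<ge>N2. x n = x N2" by auto
  show ?case
  proof (rule exI[of _ "max N1 N2"], intro ballI allI impI)
    fix x n assume x: "x \<in> set (y # ys)" and n: "max N1 N2 \<le> n"
    show "x n = x (max N1 N2)"
    proof (cases "x = y")
      case True
      then show ?thesis using N1 n by (metis max.cobounded1 order_trans)
    next
      case False
      then have "x \<in> set ys" using x by auto
      then show ?thesis using N2 n by (metis max.cobounded2 order_trans)
    qed
  qed
qed

theorem proposition4p9:
  fixes ar :: "'f \<Rightarrow> nat" and E :: "(('f,nat) trm \<times> ('f,nat) trm) set"
  assumes "is_eq_theory ar E"
    and "two_fold_decomp ar E TYPE('c)"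
  shows "\<forall>A :: ('f,'c) alg. in_variety ar E A \<longrightarrow> (\<forall>x\<in>fst A. \<forall>y\<in>fst A. x = y)"
proof (intro allI impI ballI, rule ccontr)
  fix A :: "('f,'c) alg" and a b
  assume V: "in_variety ar E A" and a: "a \<in> fst A" and b: "b \<in> fst A" and ab: "a \<noteq> b"
  define F where "F = (\<lambda>n::nat. A)"
  define S where "S = {x::nat\<Rightarrow>'c. (\<forall>n. x n \<in> fst A) \<and> (\<exists>N. \<forall>n\<ge>N. x n = x N)}"
  define T where "T = {x::nat\<Rightarrow>'c. \<forall>n. x n \<in> fst A}"
  have VF: "\<forall>n. in_variety ar E (F n)" using V by (simp add: F_def)
  have alg: "is_alg ar A" using V by (simp add: in_variety_def)
  have carr: "fst (prod_alg F) = T" by (simp add: prod_alg_def F_def T_def)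
  have op: "snd (prod_alg F) f xs = (\<lambda>n. snd A f (map (\<lambda>x. x n) xs))" for f xs
    by (simp add: prod_alg_def F_def)
  have subT: "subalgebra ar T (prod_alg F)"
    unfolding subalgebra_def carr op
  proof (intro conjI allI impI)
    fix f xs assume l: "length xs = ar f" and s: "set xs \<subseteq> T"
    show "(\<lambda>n. snd A f (map (\<lambda>x. x n) xs)) \<in> T"
      unfolding T_def
    proof (intro CollectI allI)
      fix n
      have "set (map (\<lambda>x. x n) xs) \<subseteq> fst A" using s by (auto simp: T_def)
      then show "snd A f (map (\<lambda>x. x n) xs) \<in> fst A"
        using alg l unfolding is_alg_def by auto
    qed
  qed auto
  have subS: "subalgebra ar S (prod_alg F)"
    unfolding subalgebra_def carr op
  proof (intro conjI allI impI)
    show "S \<subseteq> T" by (auto simp: S_def T_def)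
  next
    fix f xs assume l: "length xs = ar f" and s: "set xs \<subseteq> S"
    have "\<forall>x\<in>set xs. \<exists>N. \<forall>n\<ge>N. x n = x N" using s by (auto simp: S_def)
    then obtain N where N: "\<forall>x\<in>set xs. \<forall>n\<ge>N. x n = x N" using common_bound by blast
    have inT: "\<forall>n. snd A f (map (\<lambda>x. x n) xs) \<in> fst A"
    proof
      fix n
      have "set (map (\<lambda>x. x n) xs) \<subseteq> fst A" using s by (auto simp: S_def)
      then show "snd A f (map (\<lambda>x. x n) xs) \<in> fst A"
        using alg l unfolding is_alg_def by auto
    qed
    have "\<forall>n\<ge>N. snd A f (map (\<lambda>x. x n) xs) = snd A f (map (\<lambda>x. x N) xs)"
    proof (intro allI impI)
      fix n assume "N \<le> n"
      then have "map (\<lambda>x. x n) xs = map (\<lambda>x. x N) xs" using N by (simp add: map_eq_conv)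
      then show "snd A f (map (\<lambda>x. x n) xs) = snd A f (map (\<lambda>x. x N) xs)" by (rule arg_cong)
    qed
    then show "(\<lambda>n. snd A f (map (\<lambda>x. x n) xs)) \<in> S"
      using inT unfolding S_def by blast
  qed
  have proj: "(\<lambda>x. (x i, x j)) ` S = (\<lambda>x. (x i, x j)) ` T" if ij: "i \<noteq> j" for i j
  proof
    show "(\<lambda>x. (x i, x j)) ` S \<subseteq> (\<lambda>x. (x i, x j)) ` T"
      by (auto simp: S_def T_def)
  next
    show "(\<lambda>x. (x i, x j)) ` T \<subseteq> (\<lambda>x. (x i, x j)) ` S"
    proof
      fix p assume "p \<in> (\<lambda>x. (x i, x j)) ` T"
      then obtain x where x: "x \<in> T" and p: "p = (x i, x j)" by auto
      define y where "y = (\<lambda>n. if n = j then x j else x i)"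
      have "y \<in> S" unfolding S_def
      proof (intro CollectI conjI)
        show "\<forall>n. y n \<in> fst A" using x by (auto simp: y_def T_def)
        show "\<exists>N. \<forall>n\<ge>N. y n = y N"
          by (rule exI[of _ "Suc j"]) (auto simp: y_def)
      qed
      moreover have "p = (y i, y j)" using p ij by (simp add: y_def)
      ultimately show "p \<in> (\<lambda>x. (x i, x j)) ` S" by blast
    qed
  qed
  have D: "\<forall>S T. subalgebra ar S (prod_alg F) \<longrightarrow> subalgebra ar T (prod_alg F) \<longrightarrow>
           (\<forall>i j. i \<noteq> j \<longrightarrow> (\<lambda>x. (x i, x j)) ` S = (\<lambda>x. (x i, x j)) ` T) \<longrightarrow> S = T"
    using assms(2) VF unfolding two_fold_decomp_def by (elim allE[of _ F]) (erule mp)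
  have "S = T"
    using D[rule_format, OF subS subT] proj by blast
  moreover
  define z where "z = (\<lambda>n::nat. if even n then a else b)"
  have "z \<in> T" using a b by (auto simp: z_def T_def)
  moreover have "z \<notin> S"
  proof
    assume "z \<in> S"
    then obtain N where N: "\<forall>n\<ge>N. z n = z N" by (auto simp: S_def)
    have "z (Suc N) = z N" using N[rule_format, of "Suc N"] by simp
    then show False using ab by (auto simp: z_def split: if_splits)
  qed
  ultimately show False by blast
qed

end
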